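(* For $\alpha\ge-1/2$ define the infinite matrix $h_{\mathbb{N}}^{[\alpha]}$ by $$\big(h_{\mathbb{N}}^{[\alpha]}\big)_{jk}=2^{1+2\alpha}\int_0^1\sin\Big(\frac{\pi x}{2}\Big)^{2\alpha}\sin(j\pi x)\sin(k\pi x)\,\mathrm{d}x,\qquad j,k\in\mathbb{N}.$$ For $n,m\in\mathbb{N}$ with $n\le m$ let $\Lambda_0=[1,n]\cap\mathbb{N}$ and $\Lambda=[1,m]\cap\mathbb{N}$, and let $h_\Lambda^{[\alpha]}=\iota_{\Lambda_0}^*(\overline{h}^{(q)}_\Lambda)^\alpha\iota_{\Lambda_0}$. Then, uniformly in $j,k\in\{1,\dots,|\Lambda_0|\}$, $$\big(h_\Lambda^{[\alpha]}\big)_{jk}=\big(h_{\mathbb{N}}^{[\alpha]}\big)_{jk}+\mathcal{O}\Big(\frac{|\Lambda_0|}{|\Lambda|}\Big)\quad\text{for }\alpha\ge0,$$ $$\big(h_\Lambda^{[\alpha]}\big)_{jk}=\big(h_{\mathbb{N}}^{[\alpha]}\big)_{jk}+\mathcal{O}\Big(\frac{|\Lambda_0|^{1-2\alpha}}{|\Lambda|}\Big)\quad\text{for }\alpha\in[-1/2,0).$$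
   Context: $\overline{h}^{(q)}_\Lambda$ is the $|\Lambda|\times|\Lambda|$ matrix with entries $2$ on the diagonal, $-1$ for $|x-y|=1$, and $0$ otherwise (positive definite); $\iota_{\Lambda_0}:\mathbb{R}^{|\Lambda_0|}\hookrightarrow\mathbb{R}^{|\Lambda|}$ is the canonical embedding. The $\mathcal{O}$-terms are bounded by a constant (depending on $\alpha$ only) times the displayed quantity, uniformly in $n\le m$ and $j,k$. *)

theory Defs
  imports "HOL-Analysis.Analysis"
begin

text \<open>Finite matrices are represented as functions nat => nat => real, indexed by
  {1..m} x {1..m} (the lattice Lambda = [1,m] cap N).\<close>

definition hbar :: "nat \<Rightarrow> nat \<Rightarrow> nat \<Rightarrow> real" where
  "hbar m x y = (if x = y then 2 else if x = y + 1 \<or> y = x + 1 then -1 else 0)"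

definition mat_powr :: "nat \<Rightarrow> (nat \<Rightarrow> nat \<Rightarrow> real) \<Rightarrow> real \<Rightarrow> nat \<Rightarrow> nat \<Rightarrow> real" where
  "mat_powr m A \<alpha> = (SOME B. \<exists>U d.
      (\<forall>i\<in>{1..m}. \<forall>j\<in>{1..m}. (\<Sum>l\<in>{1..m}. U i l * U j l) = (if i = j then 1 else 0)) \<and>
      (\<forall>l\<in>{1..m}. d l > 0) \<and>
      (\<forall>i\<in>{1..m}. \<forall>j\<in>{1..m}. A i j = (\<Sum>l\<in>{1..m}. U i l * d l * U j l)) \<and>
      B = (\<lambda>i j. \<Sum>l\<in>{1..m}. U i l * d l powr \<alpha> * U j l))"

text \<open>h_Lambda^[alpha] = iota_{Lambda_0}^* (hbar_Lambda)^alpha iota_{Lambda_0},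
  Lambda_0 = {1..n}, Lambda = {1..m}.\<close>
definition h_Lambda :: "real \<Rightarrow> nat \<Rightarrow> nat \<Rightarrow> nat \<Rightarrow> nat \<Rightarrow> real" where
  "h_Lambda \<alpha> n m j k =
     (if j \<in> {1..n} \<and> k \<in> {1..n} then mat_powr m (hbar m) \<alpha> j k else 0)"

definition h_N :: "real \<Rightarrow> nat \<Rightarrow> nat \<Rightarrow> real" where
  "h_N \<alpha> j k = 2 powr (1 + 2 * \<alpha>) *
     integral {0..1} (\<lambda>x::real. sin (pi * x / 2) powr (2 * \<alpha>) * sin (real j * pi * x) * sin (real k * pi * x))"

end

theory Submission
  imports Defs "Jordan_Normal_Form.Determinant"
begin

lemma cos_sum_tele:
  fixes \<phi> :: real
  shows "2 * sin (\<phi>/2) * (\<Sum>l=1..m. cos (real l * \<phi>)) = sin ((real m + 1/2) * \<phi>) - sin (\<phi>/2)"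
proof (induction m)
  case 0
  then show ?case by simp
next
  case (Suc m)
  have e: "2 * sin (\<phi>/2) * cos (real (Suc m) * \<phi>) = sin ((real (Suc m) + 1/2) * \<phi>) - sin ((real m + 1/2) * \<phi>)"
  proof -
    have a: "(real (Suc m) + 1/2) * \<phi> = real (Suc m) * \<phi> + \<phi>/2" by (simp add: algebra_simps)
    have b: "(real m + 1/2) * \<phi> = real (Suc m) * \<phi> - \<phi>/2" by (simp add: algebra_simps)
    show ?thesis unfolding a b sin_add sin_diff by simp
  qed
  have "2 * sin (\<phi>/2) * (\<Sum>l=1..Suc m. cos (real l * \<phi>)) =
        2 * sin (\<phi>/2) * (\<Sum>l=1..m. cos (real l * \<phi>)) + 2 * sin (\<phi>/2) * cos (real (Suc m) * \<phi>)"
    by (simp add: algebra_simps)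
  also have "\<dots> = sin ((real (Suc m) + 1/2) * \<phi>) - sin (\<phi>/2)"
    using Suc e by simp
  finally show ?case .
qed

lemma cos_sum_root:
  fixes q m :: nat
  assumes "0 < q" "q < 2 * (m + 1)"
  shows "(\<Sum>l=1..m. cos (real l * (real q * pi / real (m + 1)))) = (if even q then -1 else 0)"
proof -
  define \<phi> where "\<phi> = real q * pi / real (m + 1)"
  have "real q < real (2 * (m + 1))" using assms(2) by (simp only: of_nat_less_iff)
  then have qr: "real q < 2 * (real m + 1)" by simp
  have "pi * real q < pi * (2 * (real m + 1))" using qr pi_gt_zero by (intro mult_strict_left_mono) auto
  then have sp: "sin (\<phi>/2) > 0"
    unfolding \<phi>_def using assms
    by (intro sin_gt_zero) (auto simp: field_simps)
  have "(real m + 1/2) * \<phi> = real q * pi - \<phi>/2"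
    unfolding \<phi>_def by (simp add: field_simps)
  then have "sin ((real m + 1/2) * \<phi>) = - ((-1)^q) * sin (\<phi>/2)"
    by (simp add: sin_diff sin_npi cos_npi)
  with cos_sum_tele[of \<phi> m]
  have "2 * sin (\<phi>/2) * (\<Sum>l=1..m. cos (real l * \<phi>)) = - (1 + (-1)^q) * sin (\<phi>/2)"
    by (simp add: algebra_simps)
  then have "sin (\<phi>/2) * (2 * (\<Sum>l=1..m. cos (real l * \<phi>)) + (1 + (-1)^q)) = 0"
    by (simp add: algebra_simps)
  then have "2 * (\<Sum>l=1..m. cos (real l * \<phi>)) + (1 + (-1)^q) = 0"
    using sp by simp
  then have "(\<Sum>l=1..m. cos (real l * \<phi>)) = - (1 + (-1)^q) / 2"
    by (simp add: field_simps)
  then show ?thesis unfolding \<phi>_def by auto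
qed

lemma cos_sum_int:
  fixes q :: int and m :: nat
  assumes "q \<noteq> 0" "\<bar>q\<bar> < 2 * (int m + 1)"
  shows "(\<Sum>l=1..m. cos (real_of_int q * real l * pi / real (m + 1))) = (if even q then -1 else 0)"
proof -
  have eq: "cos (real_of_int q * real l * pi / real (m + 1)) = cos (real l * (real (nat \<bar>q\<bar>) * pi / real (m + 1)))" for l
  proof (cases "q \<ge> 0")
    case True then show ?thesis by (simp add: algebra_simps)
  next
    case False
    then have "real (nat \<bar>q\<bar>) = - real_of_int q" by simp
    then show ?thesis by (simp add: algebra_simps)
  qed
  have "(\<Sum>l=1..m. cos (real_of_int q * real l * pi / real (m + 1))) = (\<Sum>l=1..m. cos (real l * (real (nat \<bar>q\<bar>) * pi / real (m + 1))))"
    using eq by simp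
  also have "\<dots> = (if even (nat \<bar>q\<bar>) then -1 else 0)"
    using assms by (intro cos_sum_root) auto
  also have "even (nat \<bar>q\<bar>) = even q" by (simp add: even_nat_iff)
  finally show ?thesis .
qed

definition sg :: "nat \<Rightarrow> nat \<Rightarrow> nat \<Rightarrow> real" where
  "sg m p l = sin (real p * real l * pi / real (m + 1))"

lemma sg_orth:
  assumes "p \<le> m + 1" "1 \<le> j" "j \<le> m"
  shows "(\<Sum>l=1..m. sg m p l * sg m j l) = (if p = j then (real m + 1) / 2 else 0)"
proof -
  have prod: "sg m p l * sg m j l = (cos (real_of_int (int p - int j) * real l * pi / real (m + 1))
     - cos (real_of_int (int p + int j) * real l * pi / real (m + 1))) / 2" for l
  proof -
    have a1: "real p * real l * pi / real (m+1) - real j * real l * pi / real (m+1) = real_of_int (int p - int j) * real l * pi / real (m + 1)"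
      by (simp add: diff_divide_distrib left_diff_distrib)
    have a2: "real p * real l * pi / real (m+1) + real j * real l * pi / real (m+1) = real_of_int (int p + int j) * real l * pi / real (m + 1)"
      by (simp add: add_divide_distrib distrib_right)
    show ?thesis unfolding sg_def sin_times_sin a1 a2 by (rule refl)
  qed
  have "(\<Sum>l=1..m. sg m p l * sg m j l) = ((\<Sum>l=1..m. cos (real_of_int (int p - int j) * real l * pi / real (m + 1)))
     - (\<Sum>l=1..m. cos (real_of_int (int p + int j) * real l * pi / real (m + 1)))) / 2"
    unfolding prod by (simp only: sum_divide_distrib[symmetric] sum_subtractf)
  also have "\<dots> = (if p = j then (real m + 1) / 2 else 0)"
  proof (cases "p = j")
    case True
    have 0: "(\<Sum>l=1..m. cos (real_of_int (int p - int j) * real l * pi / real (m + 1))) = real m"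
      using True by simp
    have 2: "(\<Sum>l=1..m. cos (real_of_int (int p + int j) * real l * pi / real (m + 1))) = -1"
    proof -
      have "int p + int j \<noteq> 0" "\<bar>int p + int j\<bar> < 2 * (int m + 1)" "even (int p + int j)"
        using assms True by auto
      note c = this
      have "(\<Sum>l=1..m. cos (real_of_int (int p + int j) * real l * pi / real (m + 1))) = (if even (int p + int j) then -1 else 0)"
        by (rule cos_sum_int[OF c(1) c(2)])
      also have "\<dots> = -1" using c(3) by (simp only: if_True)
      finally show ?thesis .
    qed
    show ?thesis unfolding 0 2 using True by simp
  next
    case False
    have c1: "int p - int j \<noteq> 0" "\<bar>int p - int j\<bar> < 2 * (int m + 1)"
      using assms False by auto
    have c2: "int p + int j \<noteq> 0" "\<bar>int p + int j\<bar> < 2 * (int m + 1)"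
      using assms False by auto
    have ev: "even (int p - int j) = even (int p + int j)" by presburger
    have "(\<Sum>l=1..m. cos (real_of_int (int p - int j) * real l * pi / real (m + 1))) -
      (\<Sum>l=1..m. cos (real_of_int (int p + int j) * real l * pi / real (m + 1))) = 0"
      unfolding cos_sum_int[OF c1(1) c1(2)] cos_sum_int[OF c2(1) c2(2)] ev by simp
    then show ?thesis using False by simp
  qed
  finally show ?thesis .
qed

definition Vm :: "nat \<Rightarrow> nat \<Rightarrow> nat \<Rightarrow> real" where
  "Vm m i l = sqrt (2 / real (m + 1)) * sg m i l"

definition dm :: "nat \<Rightarrow> nat \<Rightarrow> real" where
  "dm m l = 2 - 2 * cos (real l * pi / real (m + 1))"

definition sh :: "nat \<Rightarrow> nat \<Rightarrow> real" where
  "sh m l = sin (pi * (real l / real (m + 1)) / 2)"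

lemma sg_sym: "sg m i l = sg m l i"
  unfolding sg_def by (simp add: mult.commute)

lemma Vm_sym: "Vm m i l = Vm m l i"
  unfolding Vm_def using sg_sym by simp

lemma V_orth:
  assumes "i \<in> {1..m}" "j \<in> {1..m}"
  shows "(\<Sum>l\<in>{1..m}. Vm m i l * Vm m j l) = (if i = j then 1 else 0)"
proof -
  have "(\<Sum>l\<in>{1..m}. Vm m i l * Vm m j l) = (2 / real (m + 1)) * (\<Sum>l\<in>{1..m}. sg m i l * sg m j l)"
    unfolding Vm_def sum_distrib_left
    by (intro sum.cong refl) (simp add: algebra_simps)
  also have "\<dots> = (2 / real (m + 1)) * (if i = j then (real m + 1) / 2 else 0)"
    using assms by (subst sg_orth) auto
  also have "\<dots> = (if i = j then 1 else 0)" by simp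
  finally show ?thesis .
qed

lemma V_orth_col:
  assumes "i \<in> {1..m}" "j \<in> {1..m}"
  shows "(\<Sum>l\<in>{1..m}. Vm m l i * Vm m l j) = (if i = j then 1 else 0)"
  using V_orth[OF assms] by (simp add: Vm_sym)

lemma pi_half_lt: "0 \<le> x \<Longrightarrow> x < 1 \<Longrightarrow> pi * x / 2 < pi"
proof -
  assume "0 \<le> x" "x < 1"
  then have "pi * x < pi * 1" using pi_gt_zero by (intro mult_strict_left_mono) auto
  then show ?thesis using pi_gt_zero by linarith
qed

lemma sh_pos:
  assumes "l \<in> {1..m}"
  shows "sh m l > 0"
proof -
  have "real l < real (m + 1)" using assms by simp
  then have "real l / real (m + 1) < 1" by simp
  then have "pi * (real l / real (m + 1)) / 2 < pi" by (intro pi_half_lt) auto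
  moreover have "pi * (real l / real (m + 1)) / 2 > 0" using assms by simp
  ultimately show ?thesis unfolding sh_def by (intro sin_gt_zero) auto
qed

lemma dm_sh: "dm m l = 4 * (sh m l)^2"
proof -
  have g: "\<And>r::real. real l * pi / r = 2 * (pi * (real l / r) / 2)" by (simp add: algebra_simps)
  have "real l * pi / real (m + 1) = 2 * (pi * (real l / real (m + 1)) / 2)" by (rule g)
  then have "cos (real l * pi / real (m + 1)) = 1 - 2 * (sh m l)^2"
    unfolding sh_def by (metis cos_double_sin)
  then show ?thesis unfolding dm_def by simp
qed

lemma dm_pos: "l \<in> {1..m} \<Longrightarrow> dm m l > 0"
  using sh_pos[of l m] unfolding dm_sh by simp

lemma dm_sg:
  assumes "1 \<le> i"
  shows "dm m l * sg m i l = 2 * sg m i l - sg m (i + 1) l - sg m (i - 1) l"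
proof -
  define a where "a = real i * real l * pi / real (m + 1)"
  define b where "b = real l * pi / real (m + 1)"
  have 1: "real (i + 1) * real l * pi / real (m + 1) = a + b"
    unfolding a_def b_def by (simp add: add_divide_distrib distrib_right)
  have 2: "real (i - 1) * real l * pi / real (m + 1) = a - b"
    unfolding a_def b_def using assms by (simp add: of_nat_diff diff_divide_distrib left_diff_distrib)
  have "dm m l * sg m i l = 2 * sin a - 2 * cos b * sin a"
    unfolding dm_def sg_def a_def b_def by (simp add: algebra_simps)
  also have "\<dots> = 2 * sin a - sin (a + b) - sin (a - b)"
    by (simp add: sin_add sin_diff)
  finally show ?thesis unfolding sg_def 1 2 a_def .
qed

lemma hbar_decomp:
  assumes "i \<in> {1..m}" "j \<in> {1..m}"
  shows "hbar m i j = (\<Sum>l\<in>{1..m}. Vm m i l * dm m l * Vm m j l)"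
proof -
  have "(\<Sum>l\<in>{1..m}. Vm m i l * dm m l * Vm m j l)
      = (2 / real (m + 1)) * (\<Sum>l\<in>{1..m}. (dm m l * sg m i l) * sg m j l)"
    unfolding Vm_def sum_distrib_left
    by (intro sum.cong refl) (simp add: algebra_simps)
  also have "\<dots> = (2 / real (m + 1)) * (2 * (\<Sum>l\<in>{1..m}. sg m i l * sg m j l)
       - (\<Sum>l\<in>{1..m}. sg m (i+1) l * sg m j l) - (\<Sum>l\<in>{1..m}. sg m (i-1) l * sg m j l))"
  proof -
    have "(\<Sum>l\<in>{1..m}. (dm m l * sg m i l) * sg m j l) = (\<Sum>l\<in>{1..m}. 2 * (sg m i l * sg m j l)
       - sg m (i+1) l * sg m j l - sg m (i-1) l * sg m j l)"
      using assms by (intro sum.cong refl) (simp add: dm_sg algebra_simps)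
    also have "\<dots> = 2 * (\<Sum>l\<in>{1..m}. sg m i l * sg m j l)
       - (\<Sum>l\<in>{1..m}. sg m (i+1) l * sg m j l) - (\<Sum>l\<in>{1..m}. sg m (i-1) l * sg m j l)"
      by (simp only: sum_subtractf sum_distrib_left)
    finally show ?thesis by simp
  qed
  also have "\<dots> = (2 / real (m + 1)) * (2 * (if i = j then (real m + 1) / 2 else 0)
       - (if i + 1 = j then (real m + 1) / 2 else 0) - (if i - 1 = j then (real m + 1) / 2 else 0))"
  proof -
    have c: "i \<le> m + 1" "i + 1 \<le> m + 1" "i - 1 \<le> m + 1" "1 \<le> j" "j \<le> m" using assms by auto
    show ?thesis unfolding sg_orth[OF c(1) c(4) c(5)] sg_orth[OF c(2) c(4) c(5)] sg_orth[OF c(3) c(4) c(5)] ..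
  qed
  also have "\<dots> = hbar m i j"
    unfolding hbar_def using assms by (auto simp: field_simps)
  finally show ?thesis by simp
qed

lemma sum_delta_right:
  assumes "finite I" "j \<in> I"
  shows "(\<Sum>p\<in>I. g p * (if p = j then 1 else 0)) = (g j :: real)"
proof -
  have "(\<Sum>p\<in>I. g p * (if p = j then 1 else 0)) = (\<Sum>p\<in>I. if p = j then g p else 0)"
    by (intro sum.cong refl) auto
  also have "\<dots> = g j" using assms by (simp add: sum.delta)
  finally show ?thesis .
qed

lemma eig_from_col:
  fixes U :: "nat \<Rightarrow> nat \<Rightarrow> real"
  assumes fin: "finite I"
    and col: "\<forall>i\<in>I. \<forall>j\<in>I. (\<Sum>l\<in>I. U l i * U l j) = (if i = j then 1 else 0)"
    and i: "i \<in> I" and l: "l \<in> I"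
  shows "(\<Sum>j\<in>I. (\<Sum>l'\<in>I. U i l' * d l' * U j l') * U j l) = d l * U i l"
proof -
  have "(\<Sum>j\<in>I. (\<Sum>l'\<in>I. U i l' * d l' * U j l') * U j l)
      = (\<Sum>j\<in>I. \<Sum>l'\<in>I. (U i l' * d l') * (U j l' * U j l))"
    unfolding sum_distrib_right by (intro sum.cong refl) (simp add: algebra_simps)
  also have "\<dots> = (\<Sum>l'\<in>I. \<Sum>j\<in>I. (U i l' * d l') * (U j l' * U j l))"
    by (rule sum.swap)
  also have "\<dots> = (\<Sum>l'\<in>I. (U i l' * d l') * (if l' = l then 1 else 0))"
    using col l by (simp add: sum_distrib_left[symmetric])
  also have "\<dots> = U i l * d l" using fin l by (rule sum_delta_right)
  finally show ?thesis by simp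
qed

lemma spec_unique:
  fixes U V :: "nat \<Rightarrow> nat \<Rightarrow> real" and d e :: "nat \<Rightarrow> real" and f :: "real \<Rightarrow> real"
  assumes fin: "finite I"
    and Urow: "\<forall>i\<in>I. \<forall>j\<in>I. (\<Sum>l\<in>I. U i l * U j l) = (if i = j then 1 else 0)"
    and Ucol: "\<forall>i\<in>I. \<forall>j\<in>I. (\<Sum>l\<in>I. U l i * U l j) = (if i = j then 1 else 0)"
    and Vrow: "\<forall>i\<in>I. \<forall>j\<in>I. (\<Sum>l\<in>I. V i l * V j l) = (if i = j then 1 else 0)"
    and Vcol: "\<forall>i\<in>I. \<forall>j\<in>I. (\<Sum>l\<in>I. V l i * V l j) = (if i = j then 1 else 0)"
    and rep: "\<forall>i\<in>I. \<forall>j\<in>I. (\<Sum>l\<in>I. U i l * d l * U j l) = (\<Sum>l\<in>I. V i l * e l * V j l)"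
    and i: "i \<in> I" and j: "j \<in> I"
  shows "(\<Sum>l\<in>I. U i l * f (d l) * U j l) = (\<Sum>l\<in>I. V i l * f (e l) * V j l)"
proof -
  define A where "A i j = (\<Sum>l\<in>I. U i l * d l * U j l)" for i j
  have Asym: "A i j = A j i" for i j unfolding A_def by (intro sum.cong refl) (simp add: algebra_simps)
  have eigU: "(\<Sum>j\<in>I. A i j * U j l) = d l * U i l" if "i \<in> I" "l \<in> I" for i l
    unfolding A_def using eig_from_col[OF fin Ucol that] .
  have eigV: "(\<Sum>j\<in>I. A i j * V j k) = e k * V i k" if "i \<in> I" "k \<in> I" for i k
  proof -
    have "(\<Sum>j\<in>I. A i j * V j k) = (\<Sum>j\<in>I. (\<Sum>l'\<in>I. V i l' * e l' * V j l') * V j k)"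
      using rep that unfolding A_def by (intro sum.cong refl) auto
    also have "\<dots> = e k * V i k" using eig_from_col[OF fin Vcol that] .
    finally show ?thesis .
  qed
  define c where "c k l = (\<Sum>i\<in>I. V i k * U i l)" for k l
  have cev: "e k * c k l = d l * c k l" if k: "k \<in> I" and l: "l \<in> I" for k l
  proof -
    have "e k * c k l = (\<Sum>i\<in>I. (e k * V i k) * U i l)"
      unfolding c_def sum_distrib_left by (intro sum.cong refl) (simp add: algebra_simps)
    also have "\<dots> = (\<Sum>i\<in>I. (\<Sum>j\<in>I. A i j * V j k) * U i l)"
      using eigV k by simp
    also have "\<dots> = (\<Sum>i\<in>I. \<Sum>j\<in>I. V j k * (A j i * U i l))"
      unfolding sum_distrib_right by (intro sum.cong refl) (simp add: Asym algebra_simps)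
    also have "\<dots> = (\<Sum>j\<in>I. \<Sum>i\<in>I. V j k * (A j i * U i l))"
      by (rule sum.swap)
    also have "\<dots> = (\<Sum>j\<in>I. V j k * (d l * U j l))"
      using eigU l by (simp add: sum_distrib_left[symmetric])
    also have "\<dots> = d l * c k l"
      unfolding c_def sum_distrib_left by (intro sum.cong refl) (simp add: algebra_simps)
    finally show ?thesis .
  qed
  have cf: "f (e k) * c k l = f (d l) * c k l" if "k \<in> I" "l \<in> I" for k l
  proof (cases "c k l = 0")
    case True then show ?thesis by simp
  next
    case False
    then have "e k = d l" using cev[OF that] by simp
    then show ?thesis by simp
  qed
  have Uexp: "U i l = (\<Sum>k\<in>I. V i k * c k l)" if "i \<in> I" for i l
  proof -
    have "(\<Sum>k\<in>I. V i k * c k l) = (\<Sum>k\<in>I. \<Sum>p\<in>I. (V i k * V p k) * U p l)"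
      unfolding c_def sum_distrib_left by (intro sum.cong refl) (simp add: algebra_simps)
    also have "\<dots> = (\<Sum>p\<in>I. \<Sum>k\<in>I. (V i k * V p k) * U p l)"
      by (rule sum.swap)
    also have "\<dots> = (\<Sum>p\<in>I. (\<Sum>k\<in>I. V i k * V p k) * U p l)"
      by (simp only: sum_distrib_right)
    also have "\<dots> = (\<Sum>p\<in>I. U p l * (if i = p then 1 else 0))"
      using Vrow that by (intro sum.cong refl) simp
    also have "\<dots> = (\<Sum>p\<in>I. U p l * (if p = i then 1 else 0))"
      by (intro sum.cong refl) auto
    also have "\<dots> = U i l" using fin that by (rule sum_delta_right)
    finally show ?thesis by simp
  qed
  have cU: "(\<Sum>l\<in>I. c k l * U j l) = V j k" if "k \<in> I" for k
  proof -
    have "(\<Sum>l\<in>I. c k l * U j l) = (\<Sum>l\<in>I. \<Sum>p\<in>I. V p k * (U p l * U j l))"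
      unfolding c_def sum_distrib_right by (intro sum.cong refl) (simp add: algebra_simps)
    also have "\<dots> = (\<Sum>p\<in>I. \<Sum>l\<in>I. V p k * (U p l * U j l))"
      by (rule sum.swap)
    also have "\<dots> = (\<Sum>p\<in>I. V p k * (if p = j then 1 else 0))"
      using Urow j by (simp add: sum_distrib_left[symmetric])
    also have "\<dots> = V j k" using fin j by (rule sum_delta_right)
    finally show ?thesis .
  qed
  have "(\<Sum>l\<in>I. U i l * f (d l) * U j l) = (\<Sum>l\<in>I. \<Sum>k\<in>I. V i k * (f (d l) * c k l) * U j l)"
    unfolding Uexp[OF i] sum_distrib_right by (intro sum.cong refl) (simp add: algebra_simps)
  also have "\<dots> = (\<Sum>l\<in>I. \<Sum>k\<in>I. V i k * (f (e k) * c k l) * U j l)"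
    using cf by (intro sum.cong refl) (metis (no_types, lifting))
  also have "\<dots> = (\<Sum>k\<in>I. \<Sum>l\<in>I. V i k * (f (e k) * c k l) * U j l)"
    by (rule sum.swap)
  also have "\<dots> = (\<Sum>k\<in>I. V i k * f (e k) * (\<Sum>l\<in>I. c k l * U j l))"
    unfolding sum_distrib_left by (intro sum.cong refl) (simp add: algebra_simps)
  also have "\<dots> = (\<Sum>k\<in>I. V i k * f (e k) * V j k)"
    using cU by simp
  finally show ?thesis .
qed

lemma sum_shift1: "(\<Sum>l\<in>{1..m}. g l) = (\<Sum>l\<in>{0..<m}. g (Suc l))"
  by (induction m) auto

lemma row_to_col:
  fixes U :: "nat \<Rightarrow> nat \<Rightarrow> real"
  assumes row: "\<forall>i\<in>{1..m}. \<forall>j\<in>{1..m}. (\<Sum>l\<in>{1..m}. U i l * U j l) = (if i = j then 1 else 0)"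
  shows "\<forall>i\<in>{1..m}. \<forall>j\<in>{1..m}. (\<Sum>l\<in>{1..m}. U l i * U l j) = (if i = j then 1 else 0)"
proof -
  define A where "A = mat m m (\<lambda>(i,j). U (Suc i) (Suc j))"
  define B where "B = mat m m (\<lambda>(i,j). U (Suc j) (Suc i))"
  have Ac: "A \<in> carrier_mat m m" and Bc: "B \<in> carrier_mat m m" unfolding A_def B_def by auto
  have "A * B = 1\<^sub>m m"
  proof (rule eq_matI)
    fix i j assume ij: "i < dim_row (1\<^sub>m m)" "j < dim_col (1\<^sub>m m)"
    then have ij': "i < m" "j < m" by auto
    have "(A * B) $$ (i, j) = (\<Sum>l\<in>{0..<m}. U (Suc i) (Suc l) * U (Suc j) (Suc l))"
      using ij' unfolding A_def B_def by (simp add: scalar_prod_def)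
    also have "\<dots> = (\<Sum>l\<in>{1..m}. U (Suc i) l * U (Suc j) l)" by (rule sum_shift1[symmetric])
    also have "\<dots> = (if Suc i = Suc j then 1 else 0)" using row ij' by auto
    also have "\<dots> = 1\<^sub>m m $$ (i, j)" using ij' by simp
    finally show "(A * B) $$ (i, j) = 1\<^sub>m m $$ (i, j)" .
  qed (auto simp: A_def B_def)
  then have BA: "B * A = 1\<^sub>m m" by (rule mat_mult_left_right_inverse[OF Ac Bc])
  show ?thesis
  proof (intro ballI)
    fix i j assume i: "i \<in> {1..m}" and j: "j \<in> {1..m}"
    define i' where "i' = i - 1"
    define j' where "j' = j - 1"
    have ii: "i = Suc i'" "j = Suc j'" "i' < m" "j' < m" using i j unfolding i'_def j'_def by auto
    have "(\<Sum>l\<in>{1..m}. U l i * U l j) = (\<Sum>l\<in>{0..<m}. U (Suc l) (Suc i') * U (Suc l) (Suc j'))"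
      unfolding ii by (rule sum_shift1)
    also have "\<dots> = (B * A) $$ (i', j')"
      using ii unfolding A_def B_def by (simp add: scalar_prod_def)
    also have "\<dots> = (if i = j then 1 else 0)" unfolding BA using ii by simp
    finally show "(\<Sum>l\<in>{1..m}. U l i * U l j) = (if i = j then 1 else 0)" .
  qed
qed

lemma mono2: "0 \<le> (k::real) \<Longrightarrow> 0 \<le> a \<Longrightarrow> a \<le> A \<Longrightarrow> 0 \<le> b \<Longrightarrow> b \<le> B \<Longrightarrow> k * (a * b) \<le> k * (A * B)"
  by (meson mult_left_mono mult_mono order_trans)

lemma mono1: "0 \<le> (k::real) \<Longrightarrow> a \<le> A \<Longrightarrow> k * a \<le> k * A"
  by (rule mult_left_mono)

lemma inv_powr: "0 < (n::real) \<Longrightarrow> (1 / n) powr e = n powr (- e)"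
  by (subst powr_divide) (auto simp: powr_minus_divide)

lemma key_bound:
  fixes s n c t1 t2 u1 u2 \<alpha> :: real
  assumes s0: "s > 0" and s1: "s \<le> 1" and n1: "n \<ge> 1" and a: "\<alpha> \<ge> -1/2"
    and t1: "\<bar>t1\<bar> \<le> 1" "\<bar>t1\<bar> \<le> 2 * n * s" and t2: "\<bar>t2\<bar> \<le> 1" "\<bar>t2\<bar> \<le> 2 * n * s"
    and c: "\<bar>c\<bar> \<le> 1" and u1: "\<bar>u1\<bar> \<le> n * pi" and u2: "\<bar>u2\<bar> \<le> n * pi"
  shows "\<bar>2 * \<alpha> * s powr (2 * \<alpha> - 1) * (c * (pi / 2)) * t1 * t2 + s powr (2 * \<alpha>) * u1 * t2
          + s powr (2 * \<alpha>) * t1 * u2\<bar>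
         \<le> 4 * pi * (\<bar>\<alpha>\<bar> + 1) * (if \<alpha> \<ge> 0 then n else n powr (1 - 2 * \<alpha>))"
proof -
  define P where "P = s powr (2 * \<alpha>)"
  have P0: "P > 0" unfolding P_def using s0 by simp
  have Pm1: "s powr (2 * \<alpha> - 1) = P / s" unfolding P_def using s0 by (simp add: powr_diff)
  have pi0: "pi > 0" by (rule pi_gt_zero)
  define K where "K = \<bar>\<alpha>\<bar> * pi * (P / s)"
  have K0: "K \<ge> 0" unfolding K_def using P0 s0 pi0 by simp
  have ns0: "2 * n * s \<ge> 0" using n1 s0 by simp
  have A: "\<bar>2 * \<alpha> * s powr (2 * \<alpha> - 1) * (c * (pi / 2)) * t1 * t2\<bar> \<le> K * (\<bar>t1\<bar> * \<bar>t2\<bar>)"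
  proof -
    have "\<bar>2 * \<alpha> * s powr (2 * \<alpha> - 1) * (c * (pi / 2)) * t1 * t2\<bar> = K * (\<bar>c\<bar> * (\<bar>t1\<bar> * \<bar>t2\<bar>))"
      unfolding Pm1 K_def using P0 s0 pi0 by (simp add: abs_mult)
    also have "\<dots> \<le> K * (1 * (\<bar>t1\<bar> * \<bar>t2\<bar>))"
      by (rule mono2[OF K0 _ c]) auto
    finally show ?thesis by simp
  qed
  have BC: "\<bar>s powr (2 * \<alpha>) * u1 * t2 + s powr (2 * \<alpha>) * t1 * u2\<bar> \<le> P * (n * pi) * (\<bar>t1\<bar> + \<bar>t2\<bar>)"
  proof -
    have "\<bar>P * u1 * t2 + P * t1 * u2\<bar> \<le> \<bar>P * u1 * t2\<bar> + \<bar>P * t1 * u2\<bar>" by (rule abs_triangle_ineq)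
    also have "\<dots> = P * (\<bar>u1\<bar> * \<bar>t2\<bar>) + P * (\<bar>t1\<bar> * \<bar>u2\<bar>)" using P0 by (simp add: abs_mult)
    also have "\<dots> \<le> P * ((n * pi) * \<bar>t2\<bar>) + P * (\<bar>t1\<bar> * (n * pi))"
      using P0 by (intro add_mono mono2[OF _ _ u1] mono2[OF _ _ _ _ u2]) auto
    finally show ?thesis unfolding P_def by (simp add: algebra_simps)
  qed
  show ?thesis
  proof (cases "\<alpha> \<ge> 0")
    case True
    have P1: "P \<le> 1" unfolding P_def using True s0 s1 by (intro powr_le1) auto
    have "K * (\<bar>t1\<bar> * \<bar>t2\<bar>) \<le> K * ((2 * n * s) * 1)"
      by (rule mono2[OF K0 _ t1(2) _ t2(1)]) auto
    also have "\<dots> = 2 * \<bar>\<alpha>\<bar> * pi * n * P" unfolding K_def using s0 by (simp add: field_simps)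
    also have "\<dots> \<le> 2 * \<bar>\<alpha>\<bar> * pi * n * 1" using P1 n1 pi0 by (intro mono1) auto
    finally have A': "\<bar>2 * \<alpha> * s powr (2 * \<alpha> - 1) * (c * (pi / 2)) * t1 * t2\<bar> \<le> 2 * \<bar>\<alpha>\<bar> * pi * n"
      using A by simp
    have "P * (n * pi) * (\<bar>t1\<bar> + \<bar>t2\<bar>) \<le> 1 * (n * pi) * 2"
    proof -
      have "\<bar>t1\<bar> + \<bar>t2\<bar> \<le> 2" using t1 t2 by simp
      then have "(n * pi) * (P * (\<bar>t1\<bar> + \<bar>t2\<bar>)) \<le> (n * pi) * (1 * 2)"
        using P0 P1 n1 pi0 by (intro mono2) auto
      then show ?thesis by (simp add: algebra_simps)
    qed
    then have "\<bar>s powr (2 * \<alpha>) * u1 * t2 + s powr (2 * \<alpha>) * t1 * u2\<bar> \<le> 2 * n * pi" using BC by simp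
    with A' have "\<bar>2 * \<alpha> * s powr (2 * \<alpha> - 1) * (c * (pi / 2)) * t1 * t2 + s powr (2 * \<alpha>) * u1 * t2
          + s powr (2 * \<alpha>) * t1 * u2\<bar> \<le> 2 * \<bar>\<alpha>\<bar> * pi * n + 2 * n * pi" by linarith
    also have "\<dots> \<le> 4 * pi * (\<bar>\<alpha>\<bar> + 1) * n" using n1 pi0 by (simp add: algebra_simps)
    finally show ?thesis using True by simp
  next
    case False
    define Q where "Q = n powr (1 - 2 * \<alpha>)"
    have n0: "n > 0" using n1 by simp
    have Q0: "Q > 0" unfolding Q_def using n0 by simp
    have Q1: "Q = n * n powr (- 2 * \<alpha>)"
    proof -
      have "n powr (1 + (- 2 * \<alpha>)) = n powr 1 * n powr (- 2 * \<alpha>)" by (rule powr_add)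
      moreover have "1 + (- 2 * \<alpha>) = 1 - 2 * \<alpha>" by simp
      ultimately show ?thesis unfolding Q_def using n0 by simp
    qed
    have Q2: "Q = n^2 * n powr (- (2 * \<alpha> + 1))"
    proof -
      have "n^2 = n powr 2" using n0 by (simp add: powr_realpow)
      moreover have "n powr (2 + - (2 * \<alpha> + 1)) = n powr 2 * n powr (- (2 * \<alpha> + 1))" by (rule powr_add)
      moreover have "2 + - (2 * \<alpha> + 1) = 1 - 2 * \<alpha>" by simp
      ultimately show ?thesis unfolding Q_def by simp
    qed
    show ?thesis
    proof (cases "s \<le> 1 / n")
      case True
      have Ps: "P * s \<le> n powr (- (2 * \<alpha> + 1))"
      proof -
        have "P * s = s powr (2 * \<alpha> + 1)" unfolding P_def using s0 by (simp add: powr_add)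
        also have "\<dots> \<le> (1 / n) powr (2 * \<alpha> + 1)" using True s0 a by (intro powr_mono2) auto
        also have "\<dots> = n powr (- (2 * \<alpha> + 1))" using n0 by (rule inv_powr)
        finally show ?thesis .
      qed
      have "K * (\<bar>t1\<bar> * \<bar>t2\<bar>) \<le> K * ((2 * n * s) * (2 * n * s))"
        by (rule mono2[OF K0 _ t1(2) _ t2(2)]) auto
      also have "\<dots> = (4 * \<bar>\<alpha>\<bar> * pi * n^2) * (P * s)" unfolding K_def using s0 by (simp add: field_simps power2_eq_square)
      also have "\<dots> \<le> (4 * \<bar>\<alpha>\<bar> * pi * n^2) * n powr (- (2 * \<alpha> + 1))" using Ps pi0 by (intro mono1) auto
      finally have A': "\<bar>2 * \<alpha> * s powr (2 * \<alpha> - 1) * (c * (pi / 2)) * t1 * t2\<bar> \<le> 4 * \<bar>\<alpha>\<bar> * pi * Q"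
        using A unfolding Q2 by (simp add: algebra_simps)
      have "P * (n * pi) * (\<bar>t1\<bar> + \<bar>t2\<bar>) \<le> (P * (n * pi)) * (4 * n * s)"
        using P0 t1 t2 n1 pi0 by (intro mono1) auto
      also have "\<dots> = (4 * pi * n^2) * (P * s)" by (simp add: power2_eq_square algebra_simps)
      also have "\<dots> \<le> (4 * pi * n^2) * n powr (- (2 * \<alpha> + 1))" using Ps pi0 by (intro mono1) auto
      finally have "\<bar>s powr (2 * \<alpha>) * u1 * t2 + s powr (2 * \<alpha>) * t1 * u2\<bar> \<le> 4 * pi * Q"
        using BC unfolding Q2 by (simp add: algebra_simps)
      with A' have "\<bar>2 * \<alpha> * s powr (2 * \<alpha> - 1) * (c * (pi / 2)) * t1 * t2 + s powr (2 * \<alpha>) * u1 * t2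
          + s powr (2 * \<alpha>) * t1 * u2\<bar> \<le> 4 * \<bar>\<alpha>\<bar> * pi * Q + 4 * pi * Q" by linarith
      also have "\<dots> = 4 * pi * (\<bar>\<alpha>\<bar> + 1) * Q" by (simp add: algebra_simps)
      finally show ?thesis using False unfolding Q_def by simp
    next
      case True': False
      have Pn: "P \<le> n powr (- 2 * \<alpha>)"
      proof -
        have "P \<le> (1 / n) powr (2 * \<alpha>)" unfolding P_def using True' False n0 by (intro powr_mono2') auto
        also have "\<dots> = n powr (- 2 * \<alpha>)" using inv_powr[OF n0, of "2 * \<alpha>"] by simp
        finally show ?thesis .
      qed
      have "K * (\<bar>t1\<bar> * \<bar>t2\<bar>) \<le> K * ((2 * n * s) * 1)"
        by (rule mono2[OF K0 _ t1(2) _ t2(1)]) auto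
      also have "\<dots> = (2 * \<bar>\<alpha>\<bar> * pi * n) * P" unfolding K_def using s0 by (simp add: field_simps)
      also have "\<dots> \<le> (2 * \<bar>\<alpha>\<bar> * pi * n) * n powr (- 2 * \<alpha>)" using Pn n1 pi0 by (intro mono1) auto
      finally have A': "\<bar>2 * \<alpha> * s powr (2 * \<alpha> - 1) * (c * (pi / 2)) * t1 * t2\<bar> \<le> 2 * \<bar>\<alpha>\<bar> * pi * Q"
        using A unfolding Q1 by (simp add: algebra_simps)
      have "P * (n * pi) * (\<bar>t1\<bar> + \<bar>t2\<bar>) \<le> (n * pi) * (n powr (- 2 * \<alpha>) * 2)"
      proof -
        have "\<bar>t1\<bar> + \<bar>t2\<bar> \<le> 2" using t1 t2 by simp
        then have "(n * pi) * (P * (\<bar>t1\<bar> + \<bar>t2\<bar>)) \<le> (n * pi) * (n powr (- 2 * \<alpha>) * 2)"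
          using P0 Pn n1 pi0 by (intro mono2) auto
        then show ?thesis by (simp add: algebra_simps)
      qed
      then have "\<bar>s powr (2 * \<alpha>) * u1 * t2 + s powr (2 * \<alpha>) * t1 * u2\<bar> \<le> 2 * pi * Q"
        using BC unfolding Q1 by (simp add: algebra_simps)
      with A' have "\<bar>2 * \<alpha> * s powr (2 * \<alpha> - 1) * (c * (pi / 2)) * t1 * t2 + s powr (2 * \<alpha>) * u1 * t2
          + s powr (2 * \<alpha>) * t1 * u2\<bar> \<le> 2 * \<bar>\<alpha>\<bar> * pi * Q + 2 * pi * Q" by linarith
      also have "\<dots> \<le> 4 * pi * (\<bar>\<alpha>\<bar> + 1) * Q"
        using pi0 Q0 by (simp add: algebra_simps)
      finally show ?thesis using False unfolding Q_def by simp
    qed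
  qed
qed

lemma riemann_cell:
  fixes g :: "real \<Rightarrow> real" and a h L :: real
  assumes cont: "continuous_on {a..a+h} g" and h: "h \<ge> 0" and L: "L \<ge> 0"
    and lip: "\<And>x. x \<in> {a..a+h} \<Longrightarrow> \<bar>g x - g a\<bar> \<le> L * h"
  shows "\<bar>integral {a..a+h} g - h * g a\<bar> \<le> L * h * h"
proof -
  have "integral {a..a+h} (\<lambda>x. g x - g a) = integral {a..a+h} g - integral {a..a+h} (\<lambda>x. g a)"
    by (intro integral_diff integrable_continuous_interval cont) auto
  also have "integral {a..a+h} (\<lambda>x. g a) = h * g a" using h by simp
  finally have eq: "integral {a..a+h} g - h * g a = integral {a..a+h} (\<lambda>x. g x - g a)" by simp
  have "norm (integral {a..a+h} (\<lambda>x. g x - g a)) \<le> (L * h) * ((a + h) - a)"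
    by (rule integral_bound) (use h cont lip in \<open>auto intro!: continuous_intros\<close>)
  then show ?thesis unfolding eq by simp
qed

lemma riemann:
  fixes g :: "real \<Rightarrow> real" and L :: real and M :: nat
  assumes cont: "continuous_on {0..1} g" and L: "L \<ge> 0" and M: "M > 0"
    and lip: "\<And>a b. 0 \<le> a \<Longrightarrow> a \<le> b \<Longrightarrow> b \<le> 1 \<Longrightarrow> \<bar>g b - g a\<bar> \<le> L * (b - a)"
  shows "\<bar>integral {0..1} g - (1 / real M) * (\<Sum>l<M. g (real l / real M))\<bar> \<le> L / real M"
proof -
  define h where "h = 1 / real M"
  have h0: "h > 0" unfolding h_def using M by simp
  have int: "g integrable_on {0..1}" by (rule integrable_continuous_interval[OF cont])
  have claim: "\<bar>integral {0..real p * h} g - h * (\<Sum>l<p. g (real l * h))\<bar> \<le> real p * (L * h * h)"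
    if "p \<le> M" for p
    using that
  proof (induction p)
    case 0
    then show ?case by simp
  next
    case (Suc p)
    have ph: "real p * h \<ge> 0" using h0 by simp
    have p1: "real (Suc p) * h \<le> 1"
    proof -
      have "real (Suc p) \<le> real M" using Suc.prems by simp
      then have "real (Suc p) * h \<le> real M * h" using h0 by (intro mult_right_mono) auto
      also have "real M * h = 1" unfolding h_def using M by simp
      finally show ?thesis .
    qed
    have e1: "real (Suc p) * h = real p * h + h" by (simp add: algebra_simps)
    have comb: "integral {0..real p * h} g + integral {real p * h..real p * h + h} g = integral {0..real (Suc p) * h} g"
      unfolding e1
      by (rule Henstock_Kurzweil_Integration.integral_combine) (use ph h0 p1 e1 int in \<open>auto intro: integrable_subinterval_real\<close>)
    have cell: "\<bar>integral {real p * h..real p * h + h} g - h * g (real p * h)\<bar> \<le> L * h * h"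
    proof (rule riemann_cell)
      show "continuous_on {real p * h..real p * h + h} g"
        by (rule continuous_on_subset[OF cont]) (use ph p1 e1 in auto)
      show "h \<ge> 0" using h0 by simp
      show "L \<ge> 0" by (rule L)
      fix x assume x: "x \<in> {real p * h..real p * h + h}"
      have "\<bar>g x - g (real p * h)\<bar> \<le> L * (x - real p * h)"
        by (rule lip) (use x ph p1 e1 in auto)
      also have "\<dots> \<le> L * h" using x L by (intro mult_left_mono) auto
      finally show "\<bar>g x - g (real p * h)\<bar> \<le> L * h" .
    qed
    have IH: "\<bar>integral {0..real p * h} g - h * (\<Sum>l<p. g (real l * h))\<bar> \<le> real p * (L * h * h)"
      using Suc by simp
    have "integral {0..real (Suc p) * h} g - h * (\<Sum>l<Suc p. g (real l * h))
        = (integral {0..real p * h} g - h * (\<Sum>l<p. g (real l * h)))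
          + (integral {real p * h..real p * h + h} g - h * g (real p * h))"
      using comb by (simp add: algebra_simps)
    then have "\<bar>integral {0..real (Suc p) * h} g - h * (\<Sum>l<Suc p. g (real l * h))\<bar>
        \<le> real p * (L * h * h) + L * h * h"
      using IH cell by linarith
    then show ?case by (simp add: algebra_simps)
  qed
  have "\<bar>integral {0..real M * h} g - h * (\<Sum>l<M. g (real l * h))\<bar> \<le> real M * (L * h * h)"
    by (rule claim) simp
  moreover have "real M * h = 1" unfolding h_def using M by simp
  moreover have "real M * (L * h * h) = L / real M" unfolding h_def using M by (simp add: field_simps)
  moreover have "(\<Sum>l<M. g (real l * h)) = (\<Sum>l<M. g (real l / real M))" unfolding h_def by simp
  ultimately show ?thesis unfolding h_def by simp
qed

definition gf :: "real \<Rightarrow> nat \<Rightarrow> nat \<Rightarrow> real \<Rightarrow> real" where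
  "gf \<alpha> j k x = sin (pi * x / 2) powr (2 * \<alpha>) * sin (real j * pi * x) * sin (real k * pi * x)"

definition gD :: "real \<Rightarrow> nat \<Rightarrow> nat \<Rightarrow> real \<Rightarrow> real" where
  "gD \<alpha> j k x = 2 * \<alpha> * sin (pi * x / 2) powr (2 * \<alpha> - 1) * (cos (pi * x / 2) * (pi / 2)) * sin (real j * pi * x) * sin (real k * pi * x)
     + sin (pi * x / 2) powr (2 * \<alpha>) * (cos (real j * pi * x) * (real j * pi)) * sin (real k * pi * x)
     + sin (pi * x / 2) powr (2 * \<alpha>) * sin (real j * pi * x) * (cos (real k * pi * x) * (real k * pi))"

lemma sin_nat_mult: "\<bar>sin (real p * y)\<bar> \<le> real p * \<bar>sin y\<bar>"
proof (induction p)
  case 0 then show ?case by simp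
next
  case (Suc p)
  have "sin (real (Suc p) * y) = sin (real p * y) * cos y + cos (real p * y) * sin y"
    by (simp add: distrib_right sin_add)
  then have "\<bar>sin (real (Suc p) * y)\<bar> \<le> \<bar>sin (real p * y)\<bar> * \<bar>cos y\<bar> + \<bar>cos (real p * y)\<bar> * \<bar>sin y\<bar>"
    by (metis abs_mult abs_triangle_ineq)
  also have "\<dots> \<le> \<bar>sin (real p * y)\<bar> * 1 + 1 * \<bar>sin y\<bar>"
    by (intro add_mono mult_left_mono mult_right_mono) auto
  also have "\<dots> \<le> real p * \<bar>sin y\<bar> + \<bar>sin y\<bar>" using Suc by simp
  finally show ?case by (simp add: algebra_simps)
qed

lemma sin_bound_s: "\<bar>sin (real j * pi * x)\<bar> \<le> 2 * real j * \<bar>sin (pi * x / 2)\<bar>"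
proof -
  have "real j * pi * x = real (2 * j) * (pi * x / 2)" by simp
  then show ?thesis using sin_nat_mult[of "2 * j" "pi * x / 2"] by (simp add: mult.assoc)
qed

lemma s_pos: "0 < x \<Longrightarrow> x < 2 \<Longrightarrow> sin (pi * x / 2) > 0"
  by (intro sin_gt_zero) auto

lemma gf_deriv:
  assumes "0 < x" "x < 2"
  shows "(gf \<alpha> j k has_real_derivative gD \<alpha> j k x) (at x)"
proof -
  have s: "((\<lambda>x. sin (pi * x / 2)) has_real_derivative cos (pi * x / 2) * (pi / 2)) (at x)"
    by (auto intro!: derivative_eq_intros)
  have w: "((\<lambda>x. sin (pi * x / 2) powr (2 * \<alpha>)) has_real_derivative
      2 * \<alpha> * sin (pi * x / 2) powr (2 * \<alpha> - 1) * (cos (pi * x / 2) * (pi / 2))) (at x)"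
    using DERIV_fun_powr[OF s s_pos[OF assms], of "2 * \<alpha>"] by simp
  have t1: "((\<lambda>x. sin (real j * pi * x)) has_real_derivative cos (real j * pi * x) * (real j * pi)) (at x)"
    by (auto intro!: derivative_eq_intros)
  have t2: "((\<lambda>x. sin (real k * pi * x)) has_real_derivative cos (real k * pi * x) * (real k * pi)) (at x)"
    by (auto intro!: derivative_eq_intros)
  show ?thesis unfolding gf_def[abs_def]
    by (rule DERIV_cong[OF DERIV_mult'[OF DERIV_mult'[OF w t1] t2]]) (simp add: gD_def algebra_simps)
qed

lemma gD_bound:
  assumes x: "0 < x" "x \<le> 1" and a: "\<alpha> \<ge> -1/2" and jk: "j \<in> {1..n}" "k \<in> {1..n}"
  shows "\<bar>gD \<alpha> j k x\<bar> \<le> 4 * pi * (\<bar>\<alpha>\<bar> + 1) * (if \<alpha> \<ge> 0 then real n else real n powr (1 - 2 * \<alpha>))"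
  unfolding gD_def
proof (rule key_bound)
  define s where "s = sin (pi * x / 2)"
  show s0: "0 < sin (pi * x / 2)" using x by (intro s_pos) auto
  show "sin (pi * x / 2) \<le> 1" by simp
  show "1 \<le> real n" using jk by simp
  show "- 1 / 2 \<le> \<alpha>" by (rule a)
  show "\<bar>sin (real j * pi * x)\<bar> \<le> 1" "\<bar>sin (real k * pi * x)\<bar> \<le> 1" "\<bar>cos (pi * x / 2)\<bar> \<le> 1" by auto
  have "\<bar>sin (real j * pi * x)\<bar> \<le> 2 * real j * \<bar>sin (pi * x / 2)\<bar>" by (rule sin_bound_s)
  also have "\<dots> = 2 * real j * sin (pi * x / 2)" using s0 by simp
  also have "\<dots> \<le> 2 * real n * sin (pi * x / 2)" using jk s0 by (intro mult_right_mono) auto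
  finally show "\<bar>sin (real j * pi * x)\<bar> \<le> 2 * real n * sin (pi * x / 2)" .
  have "\<bar>sin (real k * pi * x)\<bar> \<le> 2 * real k * \<bar>sin (pi * x / 2)\<bar>" by (rule sin_bound_s)
  also have "\<dots> = 2 * real k * sin (pi * x / 2)" using s0 by simp
  also have "\<dots> \<le> 2 * real n * sin (pi * x / 2)" using jk s0 by (intro mult_right_mono) auto
  finally show "\<bar>sin (real k * pi * x)\<bar> \<le> 2 * real n * sin (pi * x / 2)" .
  have "\<bar>cos (real j * pi * x) * (real j * pi)\<bar> \<le> 1 * (real n * pi)"
    unfolding abs_mult using jk pi_gt_zero by (intro mult_mono) auto
  then show "\<bar>cos (real j * pi * x) * (real j * pi)\<bar> \<le> real n * pi" by simp
  have "\<bar>cos (real k * pi * x) * (real k * pi)\<bar> \<le> 1 * (real n * pi)"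
    unfolding abs_mult using jk pi_gt_zero by (intro mult_mono) auto
  then show "\<bar>cos (real k * pi * x) * (real k * pi)\<bar> \<le> real n * pi" by simp
qed

lemma gf_zero: "gf \<alpha> j k 0 = 0"
  unfolding gf_def by simp

lemma gf_small:
  assumes x: "0 \<le> x" "x \<le> 1" and a: "\<alpha> \<ge> -1/2" and jk: "j \<in> {1..n}" "k \<in> {1..n}"
  shows "\<bar>gf \<alpha> j k x\<bar> \<le> 2 * real n ^ 2 * pi * x"
proof (cases "x = 0")
  case True then show ?thesis by (simp add: gf_zero)
next
  case False
  then have x0: "x > 0" using x by simp
  define s where "s = sin (pi * x / 2)"
  have s0: "s > 0" unfolding s_def using x0 x by (intro s_pos) auto
  have s1: "s \<le> 1" unfolding s_def by simp
  have sx: "s \<le> pi * x / 2" unfolding s_def using x0 by (intro sin_x_le_x) simp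
  have b1: "\<bar>sin (real j * pi * x)\<bar> \<le> 2 * real n * s"
  proof -
    have "\<bar>sin (real j * pi * x)\<bar> \<le> 2 * real j * \<bar>s\<bar>" unfolding s_def by (rule sin_bound_s)
    also have "\<dots> = 2 * real j * s" using s0 by simp
    also have "\<dots> \<le> 2 * real n * s" using jk s0 by (intro mult_right_mono) auto
    finally show ?thesis .
  qed
  have b2: "\<bar>sin (real k * pi * x)\<bar> \<le> 2 * real n * s"
  proof -
    have "\<bar>sin (real k * pi * x)\<bar> \<le> 2 * real k * \<bar>s\<bar>" unfolding s_def by (rule sin_bound_s)
    also have "\<dots> = 2 * real k * s" using s0 by simp
    also have "\<dots> \<le> 2 * real n * s" using jk s0 by (intro mult_right_mono) auto
    finally show ?thesis .
  qed
  define P where "P = s powr (2 * \<alpha>)"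
  have P0: "P > 0" unfolding P_def using s0 by simp
  have "\<bar>gf \<alpha> j k x\<bar> = P * (\<bar>sin (real j * pi * x)\<bar> * \<bar>sin (real k * pi * x)\<bar>)"
    unfolding gf_def s_def[symmetric] P_def[symmetric] using P0 by (simp add: abs_mult)
  also have "\<dots> \<le> P * ((2 * real n * s) * (2 * real n * s))"
    by (rule mono2[OF _ _ b1 _ b2]) (use P0 in auto)
  also have "\<dots> = 4 * real n ^ 2 * (P * s powr 2)" using s0 by (simp add: power2_eq_square powr_realpow)
  also have "\<dots> \<le> 4 * real n ^ 2 * s"
  proof -
    have e: "P * s powr 2 = s powr (2 * \<alpha> + 2)" unfolding P_def by (simp add: powr_add)
    have "s powr (2 * \<alpha> + 2) \<le> s powr 1" using a s0 s1 by (intro powr_mono') auto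
    then have "P * s powr 2 \<le> s" using e s0 by simp
    then show ?thesis by (intro mono1) auto
  qed
  finally have "\<bar>gf \<alpha> j k x\<bar> \<le> 4 * real n ^ 2 * s" .
  also have "\<dots> \<le> 4 * real n ^ 2 * (pi * x / 2)" using sx by (intro mono1) auto
  also have "\<dots> = 2 * real n ^ 2 * pi * x" by simp
  finally show ?thesis .
qed

lemma gf_cont:
  assumes a: "\<alpha> \<ge> -1/2" and jk: "j \<in> {1..n}" "k \<in> {1..n}"
  shows "continuous_on {0..1} (gf \<alpha> j k)"
  unfolding continuous_on_eq_continuous_within
proof
  fix x :: real assume x: "x \<in> {0..1}"
  show "continuous (at x within {0..1}) (gf \<alpha> j k)"
  proof (cases "x = 0")
    case False
    then have "0 < x" "x < 2" using x by auto
    from gf_deriv[OF this] have "(gf \<alpha> j k has_real_derivative gD \<alpha> j k x) (at x within {0..1})"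
      by (rule has_field_derivative_at_within)
    then show ?thesis by (rule DERIV_continuous)
  next
    case True
    have ev: "eventually (\<lambda>y. norm (gf \<alpha> j k y) \<le> 2 * real n ^ 2 * pi * y) (at 0 within {0..1})"
      unfolding eventually_at by (intro exI[of _ 1]) (auto intro!: gf_small a jk)
    have lim: "((\<lambda>y. 2 * real n ^ 2 * pi * y) \<longlongrightarrow> 0) (at 0 within {0..1})"
    proof -
      have "((\<lambda>y. 2 * real n ^ 2 * pi * y) \<longlongrightarrow> 2 * real n ^ 2 * pi * 0) (at 0 within {0..1})"
        by (intro tendsto_intros)
      then show ?thesis by simp
    qed
    have "(gf \<alpha> j k \<longlongrightarrow> 0) (at 0 within {0..1})" by (rule Lim_null_comparison[OF ev lim])
    then show ?thesis unfolding True continuous_within gf_zero .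
  qed
qed

lemma gf_lip:
  assumes a: "\<alpha> \<ge> -1/2" and jk: "j \<in> {1..n}" "k \<in> {1..n}"
    and ab: "0 \<le> x" "x \<le> y" "y \<le> 1"
  shows "\<bar>gf \<alpha> j k y - gf \<alpha> j k x\<bar> \<le> (4 * pi * (\<bar>\<alpha>\<bar> + 1) * (if \<alpha> \<ge> 0 then real n else real n powr (1 - 2 * \<alpha>))) * (y - x)"
proof (cases "x = y")
  case True then show ?thesis by simp
next
  case False
  then have xy: "x < y" using ab by simp
  have cont: "continuous_on {x..y} (gf \<alpha> j k)"
    by (rule continuous_on_subset[OF gf_cont[OF a jk]]) (use ab in auto)
  have dif: "gf \<alpha> j k differentiable (at z)" if "x < z" "z < y" for z
    unfolding real_differentiable_def using gf_deriv[of z \<alpha> j k] that ab by auto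
  obtain l z where z: "x < z" "z < y" and dz: "DERIV (gf \<alpha> j k) z :> l" and eq: "gf \<alpha> j k y - gf \<alpha> j k x = (y - x) * l"
    using MVT[OF xy cont dif] by blast
  have "l = gD \<alpha> j k z" using DERIV_unique[OF dz gf_deriv[of z \<alpha> j k]] z ab by auto
  then have "\<bar>l\<bar> \<le> 4 * pi * (\<bar>\<alpha>\<bar> + 1) * (if \<alpha> \<ge> 0 then real n else real n powr (1 - 2 * \<alpha>))"
    using gD_bound[of z \<alpha> j n k] z ab a jk by auto
  then show ?thesis unfolding eq abs_mult using xy by (simp add: mult.commute mult_left_mono)
qed

lemma mat_powr_eq:
  assumes i: "i \<in> {1..m}" and j: "j \<in> {1..m}"
  shows "mat_powr m (hbar m) \<alpha> i j = (\<Sum>l\<in>{1..m}. Vm m i l * dm m l powr \<alpha> * Vm m j l)"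
proof -
  have ex: "\<exists>B. \<exists>U d.
      (\<forall>i\<in>{1..m}. \<forall>j\<in>{1..m}. (\<Sum>l\<in>{1..m}. U i l * U j l) = (if i = j then 1 else 0)) \<and>
      (\<forall>l\<in>{1..m}. d l > 0) \<and>
      (\<forall>i\<in>{1..m}. \<forall>j\<in>{1..m}. hbar m i j = (\<Sum>l\<in>{1..m}. U i l * d l * U j l)) \<and>
      B = (\<lambda>i j. \<Sum>l\<in>{1..m}. U i l * d l powr \<alpha> * U j l)"
    by (intro exI[of _ "\<lambda>i j. \<Sum>l\<in>{1..m}. Vm m i l * dm m l powr \<alpha> * Vm m j l"] exI[of _ "Vm m"] exI[of _ "dm m"])
       (use V_orth dm_pos hbar_decomp in auto)
  have "\<exists>U d.
      (\<forall>i\<in>{1..m}. \<forall>j\<in>{1..m}. (\<Sum>l\<in>{1..m}. U i l * U j l) = (if i = j then 1 else 0)) \<and>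
      (\<forall>l\<in>{1..m}. d l > 0) \<and>
      (\<forall>i\<in>{1..m}. \<forall>j\<in>{1..m}. hbar m i j = (\<Sum>l\<in>{1..m}. U i l * d l * U j l)) \<and>
      mat_powr m (hbar m) \<alpha> = (\<lambda>i j. \<Sum>l\<in>{1..m}. U i l * d l powr \<alpha> * U j l)"
    unfolding mat_powr_def by (rule someI_ex[OF ex])
  then obtain U d where
    Urow: "\<forall>i\<in>{1..m}. \<forall>j\<in>{1..m}. (\<Sum>l\<in>{1..m}. U i l * U j l) = (if i = j then 1 else 0)" and
    Urep: "\<forall>i\<in>{1..m}. \<forall>j\<in>{1..m}. hbar m i j = (\<Sum>l\<in>{1..m}. U i l * d l * U j l)" and
    B: "mat_powr m (hbar m) \<alpha> = (\<lambda>i j. \<Sum>l\<in>{1..m}. U i l * d l powr \<alpha> * U j l)"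
    by blast
  have Ucol: "\<forall>i\<in>{1..m}. \<forall>j\<in>{1..m}. (\<Sum>l\<in>{1..m}. U l i * U l j) = (if i = j then 1 else 0)"
    by (rule row_to_col[OF Urow])
  have Vrow: "\<forall>i\<in>{1..m}. \<forall>j\<in>{1..m}. (\<Sum>l\<in>{1..m}. Vm m i l * Vm m j l) = (if i = j then 1 else 0)"
    using V_orth by blast
  have Vcol: "\<forall>i\<in>{1..m}. \<forall>j\<in>{1..m}. (\<Sum>l\<in>{1..m}. Vm m l i * Vm m l j) = (if i = j then 1 else 0)"
    using V_orth_col by blast
  have rep: "\<forall>i\<in>{1..m}. \<forall>j\<in>{1..m}. (\<Sum>l\<in>{1..m}. U i l * d l * U j l) = (\<Sum>l\<in>{1..m}. Vm m i l * dm m l * Vm m j l)"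
    using Urep hbar_decomp by auto
  have "(\<Sum>l\<in>{1..m}. U i l * (\<lambda>x. x powr \<alpha>) (d l) * U j l) = (\<Sum>l\<in>{1..m}. Vm m i l * (\<lambda>x. x powr \<alpha>) (dm m l) * Vm m j l)"
    by (rule spec_unique[OF _ Urow Ucol Vrow Vcol rep i j]) simp
  then show ?thesis unfolding B by simp
qed

lemma term_eq:
  assumes l: "l \<in> {1..m}"
  shows "Vm m j l * dm m l powr \<alpha> * Vm m k l = (2 / real (m + 1)) * 4 powr \<alpha> * gf \<alpha> j k (real l / real (m + 1))"
proof -
  have sq: "sqrt (2 / real (m + 1)) * sqrt (2 / real (m + 1)) = 2 / real (m + 1)" by simp
  have d: "dm m l powr \<alpha> = 4 powr \<alpha> * sh m l powr (2 * \<alpha>)"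
  proof -
    have s0: "sh m l > 0" by (rule sh_pos[OF l])
    have "dm m l powr \<alpha> = (4 * (sh m l)^2) powr \<alpha>" unfolding dm_sh ..
    also have "\<dots> = 4 powr \<alpha> * ((sh m l)^2) powr \<alpha>" using powr_mult[of 4 "(sh m l)^2" \<alpha>] by simp
    also have "(sh m l)^2 = sh m l powr 2" using s0 by (simp add: powr_realpow)
    also have "(sh m l powr 2) powr \<alpha> = sh m l powr (2 * \<alpha>)" by (simp add: powr_powr)
    finally show ?thesis .
  qed
  have a1: "sg m j l = sin (real j * pi * (real l / real (m + 1)))"
    unfolding sg_def by (simp add: mult_ac)
  have a2: "sg m k l = sin (real k * pi * (real l / real (m + 1)))"
    unfolding sg_def by (simp add: mult_ac)
  have "Vm m j l * dm m l powr \<alpha> * Vm m k l = (sqrt (2 / real (m + 1)) * sqrt (2 / real (m + 1))) * dm m l powr \<alpha> * (sg m j l * sg m k l)"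
    unfolding Vm_def by (simp add: mult_ac)
  also have "\<dots> = (2 / real (m + 1)) * 4 powr \<alpha> * gf \<alpha> j k (real l / real (m + 1))"
    unfolding sq d a1 a2 gf_def sh_def by (simp add: mult_ac)
  finally show ?thesis .
qed

lemma sum_Suc_split: "(\<Sum>l<Suc m. f l) = f 0 + (\<Sum>l\<in>{1..m}. f l)"
  unfolding sum.lessThan_Suc_shift sum_shift1 by (simp add: atLeast0LessThan)

lemma two_powr: "2 * 4 powr \<alpha> = 2 powr (1 + 2 * (\<alpha>::real))"
proof -
  have "(2::real) powr (2 * \<alpha>) = ((2::real) powr 2) powr \<alpha>" by (simp only: powr_powr)
  also have "(2::real) powr 2 = 4" by simp
  finally have e: "4 powr \<alpha> = (2::real) powr (2 * \<alpha>)" by simp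
  have "(2::real) powr (1 + 2 * \<alpha>) = 2 powr 1 * 2 powr (2 * \<alpha>)" by (rule powr_add)
  then show ?thesis unfolding e by simp
qed

theorem lemma3p5:
  fixes \<alpha> :: real
  assumes "\<alpha> \<ge> -1/2"
  shows "\<exists>C. \<forall>n m j k. n \<le> m \<longrightarrow> j \<in> {1..n} \<longrightarrow> k \<in> {1..n} \<longrightarrow>
           \<bar>h_Lambda \<alpha> n m j k - h_N \<alpha> j k\<bar> \<le>
             C * (if \<alpha> \<ge> 0 then real n / real m else real n powr (1 - 2 * \<alpha>) / real m)"
proof -
  define K where "K = 4 * pi * (\<bar>\<alpha>\<bar> + 1)"
  have K0: "K \<ge> 0" unfolding K_def using pi_gt_zero by simp
  show ?thesis
  proof (intro exI[of _ "2 powr (1 + 2 * \<alpha>) * K"] allI impI)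
    fix n m j k :: nat
    assume nm: "n \<le> m" and j: "j \<in> {1..n}" and k: "k \<in> {1..n}"
    define NV where "NV = (if \<alpha> \<ge> 0 then real n else real n powr (1 - 2 * \<alpha>))"
    have NV0: "NV \<ge> 0" unfolding NV_def by simp
    have m1: "m \<ge> 1" using nm j by simp
    have jm: "j \<in> {1..m}" and km: "k \<in> {1..m}" using j k nm by auto
    define M where "M = m + 1"
    have M0: "M > 0" unfolding M_def by simp
    define R where "R = (1 / real M) * (\<Sum>l<M. gf \<alpha> j k (real l / real M))"
    have hL: "h_Lambda \<alpha> n m j k = 2 powr (1 + 2 * \<alpha>) * R"
    proof -
      have "h_Lambda \<alpha> n m j k = mat_powr m (hbar m) \<alpha> j k"
        unfolding h_Lambda_def using j k by simp
      also have "\<dots> = (\<Sum>l\<in>{1..m}. Vm m j l * dm m l powr \<alpha> * Vm m k l)"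
        by (rule mat_powr_eq[OF jm km])
      also have "\<dots> = (\<Sum>l\<in>{1..m}. (2 / real (m + 1)) * 4 powr \<alpha> * gf \<alpha> j k (real l / real (m + 1)))"
        by (intro sum.cong refl term_eq)
      also have "\<dots> = (2 * 4 powr \<alpha>) * ((1 / real M) * (\<Sum>l\<in>{1..m}. gf \<alpha> j k (real l / real M)))"
        unfolding M_def sum_distrib_left[symmetric] by (simp add: algebra_simps)
      also have "(\<Sum>l\<in>{1..m}. gf \<alpha> j k (real l / real M)) = (\<Sum>l<M. gf \<alpha> j k (real l / real M))"
      proof -
        have sp: "(\<Sum>l<M. F l) = F 0 + (\<Sum>l\<in>{1..m}. F l)" for F :: "nat \<Rightarrow> real"
          unfolding M_def using sum_Suc_split[of F m] by simp
        show ?thesis unfolding sp by (simp add: gf_zero)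
      qed
      finally show ?thesis unfolding R_def two_powr .
    qed
    have hN: "h_N \<alpha> j k = 2 powr (1 + 2 * \<alpha>) * integral {0..1} (gf \<alpha> j k)"
      unfolding h_N_def gf_def[abs_def] ..
    have rie: "\<bar>integral {0..1} (gf \<alpha> j k) - R\<bar> \<le> (K * NV) / real M"
      unfolding R_def
    proof (rule riemann[OF gf_cont[OF assms j k] _ M0])
      show "0 \<le> K * NV" using K0 NV0 by simp
      fix a b :: real assume "0 \<le> a" "a \<le> b" "b \<le> 1"
      then show "\<bar>gf \<alpha> j k b - gf \<alpha> j k a\<bar> \<le> K * NV * (b - a)"
        unfolding K_def NV_def by (rule gf_lip[OF assms j k])
    qed
    have "\<bar>h_Lambda \<alpha> n m j k - h_N \<alpha> j k\<bar> = 2 powr (1 + 2 * \<alpha>) * \<bar>integral {0..1} (gf \<alpha> j k) - R\<bar>"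
    proof -
      have "h_Lambda \<alpha> n m j k - h_N \<alpha> j k = 2 powr (1 + 2 * \<alpha>) * (R - integral {0..1} (gf \<alpha> j k))"
        unfolding hL hN by (simp add: right_diff_distrib)
      then have "\<bar>h_Lambda \<alpha> n m j k - h_N \<alpha> j k\<bar> = 2 powr (1 + 2 * \<alpha>) * \<bar>R - integral {0..1} (gf \<alpha> j k)\<bar>"
        by (simp add: abs_mult)
      then show ?thesis by (simp add: abs_minus_commute)
    qed
    also have "\<dots> \<le> 2 powr (1 + 2 * \<alpha>) * ((K * NV) / real M)"
      using rie by (intro mult_left_mono) auto
    also have "(K * NV) / real M \<le> (K * NV) / real m"
      unfolding M_def using m1 K0 NV0 by (intro divide_left_mono) auto
    then have "2 powr (1 + 2 * \<alpha>) * ((K * NV) / real M) \<le> 2 powr (1 + 2 * \<alpha>) * ((K * NV) / real m)"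
      by (intro mult_left_mono) auto
    also have "2 powr (1 + 2 * \<alpha>) * ((K * NV) / real m) =
        2 powr (1 + 2 * \<alpha>) * K * (if \<alpha> \<ge> 0 then real n / real m else real n powr (1 - 2 * \<alpha>) / real m)"
      unfolding NV_def by auto
    finally show "\<bar>h_Lambda \<alpha> n m j k - h_N \<alpha> j k\<bar> \<le>
        2 powr (1 + 2 * \<alpha>) * K * (if \<alpha> \<ge> 0 then real n / real m else real n powr (1 - 2 * \<alpha>) / real m)" .
  qed
qed

end
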